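(* Let $\phi(z)\in\mathbb{Q}[z]$ be a polynomial of degree $d\geq 2$ with lead coefficient $a\in\mathbb{Q}^{\times}$. Let $e\geq 1$ be an integer, let $\gamma=\sqrt[e]{a}\in\overline{\mathbb{Q}}$ be an $e$-th root of $a$, and define $\psi(z)=\gamma\,\phi(\gamma^{-1}z)$. For each place $v\in M_{\mathbb{Q}}$ at which $\phi$ has bad reduction, let $c_v$ and $C_v$ be the following constants for $\psi$ viewed in $\mathbb{C}_v[z]$: writing $\psi(z)=b_d z^d+\cdots+b_0=b_d(z-\beta_1)\cdots(z-\beta_d)$ with $\beta_i\in\mathbb{C}_v$, $A=\max_i|\beta_i|_v$, $B=|b_d|_v^{-1/d}$, set $c_v=\max\{1,A,B\}$, $C_v=\max\{1,|b_0|_v,\ldots,|b_d|_v\}$ if $v$ is non-archimedean, and $c_v=\max\{1,A+B\}$, $C_v=\max\{1,|b_0|_v+\cdots+|b_d|_v\}$ if $v$ is archimedean. Then $$-\frac{1}{d^n}\tilde{c}(\phi,e)\leq \hat{h}_{\phi}(x)-\frac{1}{e\,d^n}h\Big(a\big(\phi^n(x)\big)^e\Big)\leq\frac{1}{d^n}\tilde{C}(\phi,e)$$ for all $x\in\mathbb{Q}$ and all integers $n\geq 0$, where $$\tilde{c}(\phi,e)=\frac{d}{d-1}\sum_{v\ \text{bad}}\log c_v,\qquad \tilde{C}(\phi,e)=\frac{1}{d-1}\sum_{v\ \text{bad}}\log C_v.$$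
   Context: $M_{\mathbb{Q}}=\{|\cdot|_\infty,|\cdot|_2,|\cdot|_3,|\cdot|_5,\ldots\}$ is the set of standard absolute values (places) of $\mathbb{Q}$, normalized so that the product formula holds. For $v\in M_{\mathbb{Q}}$, $\mathbb{C}_v$ is the completion of an algebraic closure of $\mathbb{Q}_v$, and $\overline{\mathbb{Q}}$ is regarded as a subfield of $\mathbb{C}_v$ via a fixed embedding. The height of $x=m/n\in\mathbb{Q}$ in lowest terms is $h(x)=\log\max\{|m|,|n|\}$. For $\phi\in\mathbb{Q}[z]$ of degree $d\ge2$, the canonical height is $\hat{h}_\phi(x)=\lim_{n\to\infty}d^{-n}h(\phi^n(x))$, where $\phi^n$ is the $n$-th iterate. A polynomial $\phi(z)=a_dz^d+\cdots+a_0$ of degree $d\geq 2$ has good reduction at $v$ if $v$ is non-archimedean, $|a_i|_v\leq 1$ for all $i$, and $|a_d|_v=1$; otherwise it has bad reduction at $v$ (in particular the archimedean place is always bad). *)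

theory Defs
  imports "HOL-Analysis.Analysis" "HOL-Computational_Algebra.Computational_Algebra"
begin

definition padic_abs :: "nat \<Rightarrow> rat \<Rightarrow> real" where
  "padic_abs p x = (if x = 0 then 0 else
     (let (m, n) = quotient_of x in
      real p powr (- (real (multiplicity (int p) m) - real (multiplicity (int p) n)))))"

definition rat_height :: "rat \<Rightarrow> real" where
  "rat_height x = (let (m, n) = quotient_of x in ln (real_of_int (max \<bar>m\<bar> \<bar>n\<bar>)))"

definition canonical_height :: "rat poly \<Rightarrow> rat \<Rightarrow> real" where
  "canonical_height \<phi> x =
     lim (\<lambda>n. rat_height ((poly \<phi> ^^ n) x) / real (degree \<phi>) ^ n)"

definition bad_prime :: "rat poly \<Rightarrow> nat \<Rightarrow> bool" where
  "bad_prime \<phi> p \<longleftrightarrow> prime p \<and>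
     ((\<exists>i. padic_abs p (coeff \<phi> i) > 1) \<or> padic_abs p (lead_coeff \<phi>) \<noteq> 1)"

text \<open>A non-archimedean absolute value on the field of algebraic numbers (inside \<complex>)
  extending the p-adic absolute value of \<rat>; this models the fixed embedding of the
  algebraic closure of \<rat> into \<complex>_p.\<close>
definition nonarch_ext_abs :: "nat \<Rightarrow> (complex \<Rightarrow> real) \<Rightarrow> bool" where
  "nonarch_ext_abs p w \<longleftrightarrow>
     (\<forall>x. algebraic x \<longrightarrow> w x \<ge> 0 \<and> (w x = 0 \<longleftrightarrow> x = 0)) \<and>
     (\<forall>x y. algebraic x \<longrightarrow> algebraic y \<longrightarrow> w (x * y) = w x * w y) \<and>
     (\<forall>x y. algebraic x \<longrightarrow> algebraic y \<longrightarrow> w (x + y) \<le> max (w x) (w y)) \<and>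
     (\<forall>q. w (of_rat q) = padic_abs p q)"

definition psi_poly :: "rat poly \<Rightarrow> complex \<Rightarrow> complex poly" where
  "psi_poly \<phi> \<gamma> = smult \<gamma> (pcompose (map_poly of_rat \<phi>) [:0, inverse \<gamma>:])"

definition c_arch :: "rat poly \<Rightarrow> complex \<Rightarrow> real" where
  "c_arch \<phi> \<gamma> = (let \<psi> = psi_poly \<phi> \<gamma>; d = degree \<psi> in
     max 1 (Max (cmod ` {z. poly \<psi> z = 0}) + cmod (lead_coeff \<psi>) powr (- 1 / real d)))"

definition C_arch :: "rat poly \<Rightarrow> complex \<Rightarrow> real" where
  "C_arch \<phi> \<gamma> = (let \<psi> = psi_poly \<phi> \<gamma> in
     max 1 (\<Sum>i\<le>degree \<psi>. cmod (coeff \<psi> i)))"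

definition c_nonarch :: "(complex \<Rightarrow> real) \<Rightarrow> rat poly \<Rightarrow> complex \<Rightarrow> real" where
  "c_nonarch w \<phi> \<gamma> = (let \<psi> = psi_poly \<phi> \<gamma>; d = degree \<psi> in
     max 1 (max (Max (w ` {z. poly \<psi> z = 0})) (w (lead_coeff \<psi>) powr (- 1 / real d))))"

definition C_nonarch :: "(complex \<Rightarrow> real) \<Rightarrow> rat poly \<Rightarrow> complex \<Rightarrow> real" where
  "C_nonarch w \<phi> \<gamma> = (let \<psi> = psi_poly \<phi> \<gamma> in
     max 1 (Max ((\<lambda>i. w (coeff \<psi> i)) ` {..degree \<psi>})))"

text \<open>The constants c~(phi,e) and C~(phi,e); the archimedean place is always bad.\<close>
definition c_tilde :: "(nat \<Rightarrow> complex \<Rightarrow> real) \<Rightarrow> rat poly \<Rightarrow> complex \<Rightarrow> real" where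
  "c_tilde w \<phi> \<gamma> = real (degree \<phi>) / (real (degree \<phi>) - 1) *
     (ln (c_arch \<phi> \<gamma>) + (\<Sum>p\<in>{p. bad_prime \<phi> p}. ln (c_nonarch (w p) \<phi> \<gamma>)))"

definition C_tilde :: "(nat \<Rightarrow> complex \<Rightarrow> real) \<Rightarrow> rat poly \<Rightarrow> complex \<Rightarrow> real" where
  "C_tilde w \<phi> \<gamma> = 1 / (real (degree \<phi>) - 1) *
     (ln (C_arch \<phi> \<gamma>) + (\<Sum>p\<in>{p. bad_prime \<phi> p}. ln (C_nonarch (w p) \<phi> \<gamma>)))"

end

theory Submission
  imports Defs
begin

interpretation Qv: vector_space "\<lambda>(q::rat) (z::complex). of_rat q * z"
  by unfold_locales (auto simp: algebra_simps of_rat_add of_rat_mult)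

lemma alg_of_rat [simp, intro]: "algebraic (of_rat q :: complex)"
  by (rule algebraicI'[of "[:-of_rat q, 1:]"]) (auto simp: coeff_pCons split: nat.splits)

lemma span_mult_span:
  assumes "a \<in> Qv.span A" "b \<in> Qv.span B"
  shows "a * b \<in> Qv.span {x * y | x y. x \<in> A \<and> y \<in> B}"
proof -
  let ?S = "Qv.span {x * y | x y. x \<in> A \<and> y \<in> B}"
  have 1: "a' * b' \<in> ?S" if "a' \<in> Qv.span A" "b' \<in> B" for a' b'
    using that(1)
  proof (induction rule: Qv.span_induct_alt)
    case base then show ?case by (simp add: Qv.span_zero)
  next
    case (step c x y)
    have "(of_rat c * x + y) * b' = of_rat c * (x * b') + y * b'" by (simp add: algebra_simps)
    moreover have "x * b' \<in> ?S" using step that(2) by (intro Qv.span_base) blast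
    ultimately show ?case using step(2) by (simp only:) (intro Qv.span_add Qv.span_scale)
  qed
  show ?thesis using assms(2)
  proof (induction rule: Qv.span_induct_alt)
    case base then show ?case by (simp add: Qv.span_zero)
  next
    case (step c x y)
    have "a * (of_rat c * x + y) = of_rat c * (a * x) + a * y" by (simp add: algebra_simps)
    moreover have "a * x \<in> ?S" using 1 assms(1) step by blast
    ultimately show ?case using step(2) by (simp only:) (intro Qv.span_add Qv.span_scale)
  qed
qed

lemma alg_from_span:
  assumes fin: "finite T" and pw: "\<And>k. z ^ k \<in> Qv.span T"
  shows "algebraic z"
proof (cases "inj_on (\<lambda>k. z ^ k) {0..card T}")
  case False
  then obtain i j where ij: "i \<le> card T" "j \<le> card T" "i \<noteq> j" "z ^ i = z ^ j"
    unfolding inj_on_def by auto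
  define p :: "complex poly" where "p = monom 1 i - monom 1 j"
  have "p \<noteq> 0" using ij(3) unfolding p_def
    by (metis coeff_diff coeff_monom diff_zero monom_eq_iff one_neq_zero eq_iff_diff_eq_0)
  moreover have "poly p z = 0" using ij(4) by (simp add: p_def poly_monom)
  moreover have "coeff p k \<in> \<rat>" for k by (simp add: p_def coeff_monom)
  ultimately show ?thesis by (intro algebraicI'[of p]) auto
next
  case True
  let ?S = "(\<lambda>k. z ^ k) ` {0..card T}"
  have cardS: "card ?S = card T + 1" using card_image[OF True] by simp
  have sub: "?S \<subseteq> Qv.span T" using pw by auto
  have "Qv.dependent ?S"
  proof (rule ccontr)
    assume "Qv.independent ?S"
    from Qv.independent_span_bound[OF fin this sub] cardS show False by simp
  qed
  then obtain t u where tu: "finite t" "t \<subseteq> ?S" "(\<Sum>v\<in>t. of_rat (u v) * v) = 0" "\<exists>v\<in>t. u v \<noteq> 0"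
    unfolding Qv.dependent_explicit by blast
  define K where "K = {k \<in> {0..card T}. z ^ k \<in> t}"
  have tK: "t = (\<lambda>k. z ^ k) ` K" using tu(2) by (auto simp: K_def)
  have injK: "inj_on (\<lambda>k. z ^ k) K" using True by (rule inj_on_subset) (auto simp: K_def)
  define p :: "complex poly" where "p = (\<Sum>k\<in>K. monom (of_rat (u (z ^ k))) k)"
  have finK: "finite K" by (simp add: K_def)
  have cp: "coeff p n = (if n \<in> K then of_rat (u (z ^ n)) else 0)" for n
    unfolding p_def coeff_sum coeff_monom using finK by (simp add: sum.delta' )
  have "poly p z = (\<Sum>k\<in>K. of_rat (u (z ^ k)) * z ^ k)"
    unfolding p_def poly_sum poly_monom by simp
  also have "\<dots> = (\<Sum>v\<in>t. of_rat (u v) * v)" unfolding tK using injK by (simp add: sum.reindex)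
  finally have "poly p z = 0" using tu(3) by simp
  moreover from tu(4) obtain k where "k \<in> K" "u (z ^ k) \<noteq> 0" unfolding tK by auto
  hence "coeff p k \<noteq> 0" using cp by simp
  hence "p \<noteq> 0" by auto
  moreover have "coeff p n \<in> \<rat>" for n by (simp add: cp)
  ultimately show ?thesis by (intro algebraicI'[of p]) auto
qed

lemma alg_span_powers:
  assumes "algebraic (x::complex)"
  obtains m where "m \<ge> 1" "\<And>k. x ^ k \<in> Qv.span ((\<lambda>i. x ^ i) ` {..<m})"
proof -
  obtain p where p: "p \<noteq> 0" "poly (map_poly of_int p) x = 0" using assms by (erule algebraicE')
  define q :: "complex poly" where "q = map_poly of_int p"
  have q0: "q \<noteq> 0" using p(1) by (simp add: q_def map_poly_eq_0_iff)
  have qx: "poly q x = 0" using p(2) by (simp add: q_def)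
  define m where "m = degree q"
  have m1: "m \<ge> 1"
  proof (rule ccontr)
    assume "\<not> m \<ge> 1" hence "degree q = 0" by (simp add: m_def)
    then obtain c where "q = [:c:]" by (metis degree_eq_zeroE)
    with q0 qx show False by simp
  qed
  have cq: "coeff q i \<in> \<rat>" for i by (simp add: q_def coeff_map_poly)
  let ?T = "(\<lambda>i. x ^ i) ` {..<m}"
  have lc: "coeff q m \<noteq> 0" using q0 by (simp add: m_def)
  have "poly q x = (\<Sum>i\<le>m. coeff q i * x ^ i)" by (simp add: poly_altdef m_def)
  also have "\<dots> = (\<Sum>i<m. coeff q i * x ^ i) + coeff q m * x ^ m"
    by (simp add: lessThan_Suc_atMost[symmetric])
  finally have s: "(\<Sum>i<m. coeff q i * x ^ i) + coeff q m * x ^ m = 0" using qx by simp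
  have xm: "x ^ m = - (\<Sum>i<m. (coeff q i / coeff q m) * x ^ i)"
  proof -
    have "coeff q m * x ^ m = - (\<Sum>i<m. coeff q i * x ^ i)" using s by (simp add: add_eq_0_iff add.commute)
    then have "x ^ m = (- (\<Sum>i<m. coeff q i * x ^ i)) / coeff q m" using lc by (simp add: field_simps)
    also have "\<dots> = - (\<Sum>i<m. (coeff q i / coeff q m) * x ^ i)"
      by (simp add: sum_divide_distrib)
    finally show ?thesis .
  qed
  have "x ^ k \<in> Qv.span ?T" for k
  proof (induction k rule: less_induct)
    case (less k)
    show ?case
    proof (cases "k < m")
      case True then show ?thesis by (intro Qv.span_base) auto
    next
      case False
      then have "x ^ k = x ^ (k - m) * x ^ m" by (simp add: power_add[symmetric])
      also have "\<dots> = - (\<Sum>i<m. (coeff q i / coeff q m) * x ^ (k - m + i))"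
        unfolding xm mult_minus_right sum_distrib_left by (simp add: power_add mult_ac)
      also have "\<dots> \<in> Qv.span ?T"
      proof -
        have "(coeff q i / coeff q m) * x ^ (k - m + i) \<in> Qv.span ?T" if "i < m" for i
        proof -
          obtain r where r: "coeff q i / coeff q m = of_rat r"
            using cq[of i] cq[of m] by (metis Rats_cases Rats_divide)
          have "x ^ (k - m + i) \<in> Qv.span ?T" using less that False m1 by simp
          then show ?thesis unfolding r by (rule Qv.span_scale)
        qed
        then have "(\<Sum>i<m. (coeff q i / coeff q m) * x ^ (k - m + i)) \<in> Qv.span ?T"
          by (intro Qv.span_sum) auto
        then show ?thesis using Qv.span_neg by blast
      qed
      finally show ?thesis .
    qed
  qed
  then show ?thesis using m1 that by blast
qed

lemma alg_closed:
  assumes "algebraic (x::complex)" "algebraic y"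
  shows "algebraic (x * y)" "algebraic (x + y)"
proof -
  obtain m where m: "m \<ge> 1" "\<And>k. x ^ k \<in> Qv.span ((\<lambda>i. x ^ i) ` {..<m})"
    using alg_span_powers[OF assms(1)] by blast
  obtain n where n: "n \<ge> 1" "\<And>k. y ^ k \<in> Qv.span ((\<lambda>i. y ^ i) ` {..<n})"
    using alg_span_powers[OF assms(2)] by blast
  define A where "A = (\<lambda>i. x ^ i) ` {..<m}"
  define B where "B = (\<lambda>i. y ^ i) ` {..<n}"
  define T where "T = {a * b | a b. a \<in> A \<and> b \<in> B}"
  have finT: "finite T"
  proof -
    have "T = (\<lambda>(a,b). a * b) ` (A \<times> B)" by (auto simp: T_def)
    then show ?thesis by (simp add: A_def B_def)
  qed
  have xy: "x ^ i * y ^ j \<in> Qv.span T" for i j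
    using span_mult_span[OF m(2)[of i] n(2)[of j]] by (simp add: T_def A_def B_def)
  have TT: "a * b \<in> Qv.span T" if "a \<in> T" "b \<in> T" for a b
  proof -
    from that obtain i j i' j' where "a = x ^ i * y ^ j" "b = x ^ i' * y ^ j'"
      by (auto simp: T_def A_def B_def)
    then have "a * b = x ^ (i + i') * y ^ (j + j')" by (simp add: power_add algebra_simps)
    then show ?thesis using xy by simp
  qed
  have closed: "a * b \<in> Qv.span T" if "a \<in> Qv.span T" "b \<in> Qv.span T" for a b
  proof -
    have "a * b \<in> Qv.span {x * y | x y. x \<in> T \<and> y \<in> T}" by (rule span_mult_span[OF that])
    also have "\<dots> \<subseteq> Qv.span (Qv.span T)" by (rule Qv.span_mono) (use TT in blast)
    finally show ?thesis by (simp add: Qv.span_span)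
  qed
  have pw: "z ^ k \<in> Qv.span T" if "z \<in> Qv.span T" for z k
  proof (induction k)
    case 0 show ?case using xy[of 0 0] by simp
  next
    case (Suc k) show ?case using closed[OF that Suc] by (simp add: mult.commute)
  qed
  show "algebraic (x * y)" using xy[of 1 1] by (intro alg_from_span[OF finT] pw) simp
  have "x \<in> Qv.span T" "y \<in> Qv.span T" using xy[of 1 0] xy[of 0 1] by simp_all
  then have "x + y \<in> Qv.span T" by (rule Qv.span_add)
  then show "algebraic (x + y)" by (intro alg_from_span[OF finT] pw)
qed

lemma alg_power: "algebraic (x::complex) \<Longrightarrow> algebraic (x ^ k)"
  by (induction k) (auto intro: alg_closed)

lemma alg_minus_c: "algebraic (x::complex) \<Longrightarrow> algebraic (- x)"
  by (rule algebraic_minus)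

lemma alg_diff: "algebraic (x::complex) \<Longrightarrow> algebraic y \<Longrightarrow> algebraic (x - y)"
  using alg_closed(2)[of x "-y"] algebraic_minus[of y] by simp

lemma alg_sum: "(\<And>i. i \<in> I \<Longrightarrow> algebraic (f i :: complex)) \<Longrightarrow> algebraic (sum f I)"
  by (induction I rule: infinite_finite_induct) (auto intro: alg_closed)

lemma alg_prod: "(\<And>i. i \<in> I \<Longrightarrow> algebraic (f i :: complex)) \<Longrightarrow> algebraic (prod f I)"
  by (induction I rule: infinite_finite_induct) (auto intro: alg_closed simp: algebraic_def[of 1])



context
  fixes p :: nat and W :: "complex \<Rightarrow> real"
  assumes NA: "nonarch_ext_abs p W"
begin

lemma W_nonneg: "algebraic x \<Longrightarrow> W x \<ge> 0"
  using NA unfolding nonarch_ext_abs_def by blast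

lemma W_eq0: "algebraic x \<Longrightarrow> W x = 0 \<longleftrightarrow> x = 0"
  using NA unfolding nonarch_ext_abs_def by blast

lemma W_mult: "algebraic x \<Longrightarrow> algebraic y \<Longrightarrow> W (x * y) = W x * W y"
  using NA unfolding nonarch_ext_abs_def by blast

lemma W_add: "algebraic x \<Longrightarrow> algebraic y \<Longrightarrow> W (x + y) \<le> max (W x) (W y)"
  using NA unfolding nonarch_ext_abs_def by blast

lemma W_rat: "W (of_rat q) = padic_abs p q"
  using NA unfolding nonarch_ext_abs_def by blast

lemma W_one: "W 1 = 1"
proof -
  have "W 1 = W 1 * W 1" using W_mult[of 1 1] alg_of_rat[of 1] by simp
  moreover have "W 1 \<noteq> 0" using W_eq0[of 1] alg_of_rat[of 1] by simp
  ultimately show ?thesis by (metis mult_cancel_left1)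
qed

lemma W_minus: "algebraic x \<Longrightarrow> W (- x) = W x"
proof -
  have a: "algebraic (-1 :: complex)" using alg_of_rat[of "-1"] by simp
  have "W (-1) * W (-1) = 1" using W_mult[OF a a] W_one by simp
  moreover have "W (-1) \<ge> 0" using W_nonneg[OF a] .
  moreover have "(W (-1) - 1) * (W (-1) + 1) = W (-1) * W (-1) - 1" by (simp add: algebra_simps)
  ultimately have "W (-1) = 1" by (auto simp: mult_eq_0_iff)
  moreover assume "algebraic x"
  ultimately show ?thesis using W_mult[OF a, of x] by simp
qed

lemma W_power: "algebraic x \<Longrightarrow> W (x ^ n) = W x ^ n"
  by (induction n) (auto simp: W_one W_mult alg_power)

lemma W_prod: "(\<And>i. i \<in> I \<Longrightarrow> algebraic (f i)) \<Longrightarrow> W (prod f I) = (\<Prod>i\<in>I. W (f i))"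
proof (induction I rule: infinite_finite_induct)
  case (insert i I)
  then show ?case by (simp add: W_mult alg_prod)
qed (auto simp: W_one)

lemma W_sum_le:
  assumes "\<And>i. i \<in> I \<Longrightarrow> algebraic (f i)" "\<And>i. i \<in> I \<Longrightarrow> W (f i) \<le> M" "M \<ge> 0"
  shows "W (sum f I) \<le> M"
  using assms
proof (induction I rule: infinite_finite_induct)
  case (infinite I) then show ?case using W_rat[of 0] by (simp add: padic_abs_def)
next
  case empty then show ?case using W_rat[of 0] by (simp add: padic_abs_def)
next
  case (insert i I)
  have "W (f i + sum f I) \<le> max (W (f i)) (W (sum f I))"
    using insert by (intro W_add) (auto intro: alg_sum)
  also have "\<dots> \<le> M" using insert by auto
  finally show ?case using insert by simp
qed

lemma W_inverse: "algebraic x \<Longrightarrow> W (inverse x) = inverse (W x)"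
proof (cases "x = 0")
  case True then show ?thesis using W_rat[of 0] by (simp add: padic_abs_def)
next
  case False
  assume a: "algebraic x"
  have "W x * W (inverse x) = 1" using W_mult[OF a algebraic_inverse[OF a]] False W_one by simp
  then show ?thesis by (metis inverse_unique)
qed

lemma padic_mult: "padic_abs p (x * y) = padic_abs p x * padic_abs p y"
  using W_mult[of "of_rat x" "of_rat y"] by (simp add: W_rat[symmetric] of_rat_mult)

lemma padic_power: "padic_abs p (x ^ n) = padic_abs p x ^ n"
  using W_power[of "of_rat x" n] by (simp add: W_rat[symmetric] of_rat_power)

lemma padic_nonneg: "padic_abs p x \<ge> 0"
  using W_nonneg[of "of_rat x"] by (simp add: W_rat)

end

lemma padic_ln:
  assumes "prime p"
  shows "ln (max 1 (padic_abs p q)) = real (multiplicity (int p) (snd (quotient_of q))) * ln (real p)"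
proof (cases "q = 0")
  case True then show ?thesis by (simp add: padic_abs_def)
next
  case False
  obtain m n where mn: "quotient_of q = (m, n)" by (cases "quotient_of q")
  have n0: "n > 0" using quotient_of_denom_pos[OF mn] .
  have cop: "coprime m n" using quotient_of_coprime[OF mn] .
  have p1: "real p > 1" using assms prime_gt_1_nat by auto
  have pa: "padic_abs p q = real p powr (- (real (multiplicity (int p) m) - real (multiplicity (int p) n)))"
    using False mn by (simp add: padic_abs_def)
  show ?thesis
  proof (cases "int p dvd n")
    case True
    have "\<not> int p dvd m"
    proof
      assume "int p dvd m"
      with True cop have "is_unit (int p)" by (meson coprime_common_divisor)
      with assms show False by (simp add: prime_nat_int_transfer[symmetric] del: prime_nat_int_transfer)
    qed
    then have "multiplicity (int p) m = 0" by (rule not_dvd_imp_multiplicity_0)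
    then have "padic_abs p q = real p powr real (multiplicity (int p) n)" using pa by simp
    moreover have "real p powr real (multiplicity (int p) n) \<ge> 1" using p1 by (intro ge_one_powr_ge_zero) auto
    ultimately show ?thesis using mn p1 by (simp add: ln_powr)
  next
    case False
    then have m0: "multiplicity (int p) n = 0" by (rule not_dvd_imp_multiplicity_0)
    have "padic_abs p q \<le> 1" using pa m0 p1 ge_one_powr_ge_zero[of "real p" "real (multiplicity (int p) m)"] by (simp add: powr_minus_divide)
    then show ?thesis using mn m0 by simp
  qed
qed

lemma ln_den:
  assumes n0: "(n::int) > 0" and finP: "finite P" and Pp: "\<And>p. p \<in> P \<Longrightarrow> prime p"
    and cov: "\<And>p. prime p \<Longrightarrow> int p dvd n \<Longrightarrow> p \<in> P"
  shows "ln (real_of_int n) = (\<Sum>p\<in>P. real (multiplicity (int p) n) * ln (real p))"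
proof -
  have pf: "(\<Prod>q\<in>prime_factors n. q ^ multiplicity q n) = n"
    using prod_prime_factors[of n] n0 by simp
  have sub: "prime_factors n \<subseteq> int ` P"
  proof
    fix q assume q: "q \<in> prime_factors n"
    then have "prime q" "q dvd n" by (auto simp: in_prime_factors_iff)
    then have "q = int (nat q)" "prime (nat q)" "int (nat q) dvd n"
      using prime_ge_0_int by auto
    then show "q \<in> int ` P" using cov by blast
  qed
  have "(\<Prod>q\<in>int ` P. q ^ multiplicity q n) = (\<Prod>q\<in>prime_factors n. q ^ multiplicity q n)"
  proof (rule prod.mono_neutral_right[OF _ sub])
    show "finite (int ` P)" using finP by simp
    show "\<forall>i\<in>int ` P - prime_factors n. i ^ multiplicity i n = 1"
    proof
      fix i assume i: "i \<in> int ` P - prime_factors n"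
      then have "prime i" using Pp by auto
      with i n0 have "\<not> i dvd n" by (auto simp: in_prime_factors_iff)
      then show "i ^ multiplicity i n = 1" by (simp add: not_dvd_imp_multiplicity_0)
    qed
  qed
  then have pr: "(\<Prod>p\<in>P. int p ^ multiplicity (int p) n) = n"
    using pf by (simp add: prod.reindex)
  then have "real_of_int n = (\<Prod>p\<in>P. real p ^ multiplicity (int p) n)"
    using arg_cong[OF pr, of real_of_int] by (simp add: of_int_prod of_int_power)
  then have "ln (real_of_int n) = (\<Sum>p\<in>P. ln (real p ^ multiplicity (int p) n))"
    using Pp finP by (simp add: ln_prod prime_gt_0_nat)
  also have "\<dots> = (\<Sum>p\<in>P. real (multiplicity (int p) n) * ln (real p))"
    using Pp by (intro sum.cong) (auto simp: ln_realpow prime_gt_0_nat)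
  finally show ?thesis .
qed

definition den_primes :: "rat \<Rightarrow> nat set" where
  "den_primes q = {p. prime p \<and> int p dvd snd (quotient_of q)}"

lemma finite_den_primes: "finite (den_primes q)"
proof -
  have "den_primes q \<subseteq> {..nat (snd (quotient_of q))}"
    using quotient_of_denom_pos'[of q]
    by (auto simp: den_primes_def dest!: zdvd_imp_le)
  then show ?thesis by (rule finite_subset) simp
qed

lemma height_decomp:
  assumes finP: "finite P" and Pp: "\<And>p. p \<in> P \<Longrightarrow> prime p" and cov: "den_primes q \<subseteq> P"
  shows "rat_height q = ln (max 1 \<bar>real_of_rat q\<bar>) + (\<Sum>p\<in>P. ln (max 1 (padic_abs p q)))"
proof -
  obtain m n where mn: "quotient_of q = (m, n)" by (cases "quotient_of q")
  have n0: "n > 0" using quotient_of_denom_pos[OF mn] .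
  have q: "real_of_rat q = real_of_int m / real_of_int n"
    using quotient_of_div[OF mn] by (simp add: of_rat_divide)
  have nr: "real_of_int n > 0" using n0 by simp
  have e1: "real_of_int n * max 1 \<bar>real_of_rat q\<bar> = max (real_of_int n * 1) (real_of_int n * \<bar>real_of_rat q\<bar>)"
    using nr by (simp only: max_mult_distrib_left) simp
  have e2: "real_of_int n * \<bar>real_of_rat q\<bar> = \<bar>real_of_int m\<bar>"
    unfolding q using nr by (simp only: abs_divide) (simp add: abs_of_pos)
  have e3: "max (real_of_int n * 1) \<bar>real_of_int m\<bar> = real_of_int (max \<bar>m\<bar> n)"
    by (simp only: of_int_max of_int_abs mult_1_right max.commute)
  have eq: "real_of_int (max \<bar>m\<bar> n) = real_of_int n * max 1 \<bar>real_of_rat q\<bar>"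
    using e1 e2 e3 by simp
  have "rat_height q = ln (real_of_int (max \<bar>m\<bar> n))" using n0 by (simp add: rat_height_def mn)
  also have "\<dots> = ln (real_of_int n) + ln (max 1 \<bar>real_of_rat q\<bar>)"
    unfolding eq using nr by (intro ln_mult_pos) auto
  finally have "rat_height q = ln (real_of_int n) + ln (max 1 \<bar>real_of_rat q\<bar>)" .
  also have "ln (real_of_int n) = (\<Sum>p\<in>P. real (multiplicity (int p) n) * ln (real p))"
    using n0 finP Pp cov mn by (intro ln_den) (auto simp: den_primes_def)
  also have "\<dots> = (\<Sum>p\<in>P. ln (max 1 (padic_abs p q)))"
    using Pp mn by (intro sum.cong) (auto simp: padic_ln)
  finally show ?thesis by simp
qed



lemma poly_decomp_roots:
  fixes q :: "complex poly"
  assumes "q \<noteq> 0"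
  obtains r where "\<And>u. poly q u = lead_coeff q * (\<Prod>i<degree q. u - r i)"
    "\<And>i. i < degree q \<Longrightarrow> poly q (r i) = 0"
proof -
  obtain r where r: "smult (lead_coeff q) (\<Prod>i<degree q. [:-r i, 1:]) = q"
    using complex_poly_decompose' by blast
  have ev: "poly q u = lead_coeff q * (\<Prod>i<degree q. u - r i)" for u
    by (subst r[symmetric]) (simp add: poly_prod)
  have "poly q (r i) = 0" if "i < degree q" for i
    unfolding ev using that by (intro mult_eq_0_iff[THEN iffD2] disjI2 prod_zero) auto
  with ev that show ?thesis by blast
qed

lemma nonarch_upper:
  assumes NA: "nonarch_ext_abs p W" and ac: "\<And>i. algebraic (coeff q i)" and au: "algebraic u"
  shows "W (poly q u) \<le> max 1 (Max ((\<lambda>i. W (coeff q i)) ` {..degree q})) * max 1 (W u) ^ degree q"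
proof -
  let ?M = "max 1 (Max ((\<lambda>i. W (coeff q i)) ` {..degree q}))"
  have Wu: "W u \<ge> 0" by (rule W_nonneg[OF NA au])
  show ?thesis unfolding poly_altdef
  proof (rule W_sum_le[OF NA])
    fix i assume i: "i \<in> {..degree q}"
    show "algebraic (coeff q i * u ^ i)" by (intro alg_closed alg_power ac au)
    have "W (coeff q i * u ^ i) = W (coeff q i) * W u ^ i"
      by (simp add: W_mult[OF NA] W_power[OF NA] ac au alg_power)
    also have "\<dots> \<le> ?M * max 1 (W u) ^ degree q"
    proof (rule mult_mono)
      show "W (coeff q i) \<le> ?M" using i by (intro max.coboundedI2 Max_ge) auto
      have "W u ^ i \<le> max 1 (W u) ^ i" using Wu by (intro power_mono) auto
      also have "\<dots> \<le> max 1 (W u) ^ degree q" using i by (intro power_increasing) auto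
      finally show "W u ^ i \<le> max 1 (W u) ^ degree q" .
    qed (auto simp: W_nonneg[OF NA] ac Wu)
    finally show "W (coeff q i * u ^ i) \<le> ?M * max 1 (W u) ^ degree q" .
  qed simp
qed

lemma powr_d_inv:
  assumes "x > 0" "d > 0"
  shows "(x powr (- 1 / real d)) ^ d * x = 1"
proof -
  have "(x powr (- 1 / real d)) ^ d = (x powr (- 1 / real d)) powr real d"
    using assms by (simp add: powr_realpow)
  also have "\<dots> = x powr (- 1 / real d * real d)" by (simp add: powr_powr)
  also have "- 1 / real d * real d = - 1" using assms by simp
  also have "x powr (- 1) = inverse x" using assms by (simp add: powr_minus)
  finally show ?thesis using assms by simp
qed

lemma nonarch_lower:
  assumes NA: "nonarch_ext_abs p W" and q0: "q \<noteq> 0" and d1: "degree q \<ge> 1"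
    and ac: "\<And>i. algebraic (coeff q i)" and ar: "\<And>z. poly q z = 0 \<Longrightarrow> algebraic z"
    and au: "algebraic u"
  shows "max 1 (W u) ^ degree q \<le>
    (max 1 (max (Max (W ` {z. poly q z = 0})) (W (lead_coeff q) powr (- 1 / real (degree q))))) ^ degree q
     * max 1 (W (poly q u))"
proof -
  define d where "d = degree q"
  define A where "A = Max (W ` {z. poly q z = 0})"
  define B where "B = W (lead_coeff q) powr (- 1 / real d)"
  define c where "c = max 1 (max A B)"
  obtain r where r: "\<And>u. poly q u = lead_coeff q * (\<Prod>i<d. u - r i)"
    "\<And>i. i < d \<Longrightarrow> poly q (r i) = 0"
    using poly_decomp_roots[OF q0] unfolding d_def by blast
  have fin: "finite {z. poly q z = 0}" using q0 by (rule poly_roots_finite)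
  have rootA: "W z \<le> A" if "poly q z = 0" for z unfolding A_def using fin that by auto
  have c1: "c \<ge> 1" by (simp add: c_def)
  have alc: "algebraic (lead_coeff q)" by (rule ac)
  have lc0: "lead_coeff q \<noteq> 0" using q0 by simp
  have Wlc: "W (lead_coeff q) > 0" using W_nonneg[OF NA alc] W_eq0[OF NA alc] lc0 by auto
  have d0: "d > 0" using d1 by (simp add: d_def)
  have Bd: "B ^ d * W (lead_coeff q) = 1" unfolding B_def by (rule powr_d_inv[OF Wlc d0])
  have B0: "B \<ge> 0" by (simp add: B_def)
  have Wu0: "W u \<ge> 0" by (rule W_nonneg[OF NA au])
  have aP: "algebraic (poly q u)" unfolding poly_altdef by (intro alg_sum alg_closed alg_power ac au)
  have WP0: "W (poly q u) \<ge> 0" by (rule W_nonneg[OF NA aP])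
  have main: "max 1 (W u) ^ d \<le> c ^ d * max 1 (W (poly q u))"
  proof (cases "W u \<le> c")
    case True
    have "max 1 (W u) ^ d \<le> c ^ d" using True c1 Wu0 by (intro power_mono) auto
    also have "\<dots> \<le> c ^ d * max 1 (W (poly q u))" using c1 by simp
    finally show ?thesis .
  next
    case False
    have ri: "algebraic (r i)" if "i < d" for i using ar r(2) that by blast
    have ge: "W (u - r i) \<ge> W u" if "i < d" for i
    proof -
      have "W (r i) \<le> A" using rootA r(2) that by blast
      also have "A \<le> c" by (simp add: c_def)
      finally have lt: "W (r i) < W u" using False by simp
      have "W u = W ((u - r i) + r i)" by simp
      also have "\<dots> \<le> max (W (u - r i)) (W (r i))"
        using ri[OF that] au by (intro W_add[OF NA] alg_diff)
      finally show ?thesis using lt by auto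
    qed
    have "W (poly q u) = W (lead_coeff q) * (\<Prod>i<d. W (u - r i))"
    proof -
      have ap: "algebraic (\<Prod>i<d. u - r i)" using ri au by (intro alg_prod alg_diff) auto
      have "W (\<Prod>i<d. u - r i) = (\<Prod>i<d. W (u - r i))"
        using ri au by (intro W_prod[OF NA] alg_diff) auto
      then show ?thesis unfolding r(1) W_mult[OF NA alc ap] by simp
    qed
    also have "\<dots> \<ge> W (lead_coeff q) * W u ^ d"
    proof -
      have "(\<Prod>i<d. W u) \<le> (\<Prod>i<d. W (u - r i))"
        using ge Wu0 by (intro prod_mono) auto
      then show ?thesis using Wlc by (simp add: mult_left_mono)
    qed
    finally have P: "W (poly q u) \<ge> W (lead_coeff q) * W u ^ d" .
    have "W u ^ d = (B ^ d * W (lead_coeff q)) * W u ^ d" using Bd by simp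
    also have "\<dots> = B ^ d * (W (lead_coeff q) * W u ^ d)" by (simp only: mult.assoc)
    also have "\<dots> \<le> B ^ d * W (poly q u)" using P B0 by (intro mult_left_mono) auto
    also have "\<dots> \<le> c ^ d * W (poly q u)" using WP0 B0
      by (intro mult_right_mono power_mono) (auto simp: c_def)
    also have "\<dots> \<le> c ^ d * max 1 (W (poly q u))" using c1 by (intro mult_left_mono) auto
    finally have "W u ^ d \<le> c ^ d * max 1 (W (poly q u))" .
    moreover have "max 1 (W u) = W u" using False c1 by simp
    ultimately show ?thesis by simp
  qed
  show ?thesis using main unfolding d_def A_def B_def c_def .
qed

lemma arch_upper:
  shows "cmod (poly q u) \<le> max 1 (\<Sum>i\<le>degree q. cmod (coeff q i)) * max 1 (cmod u) ^ degree q"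
proof -
  have "cmod (poly q u) \<le> (\<Sum>i\<le>degree q. cmod (coeff q i * u ^ i))"
    unfolding poly_altdef by (rule norm_sum)
  also have "\<dots> \<le> (\<Sum>i\<le>degree q. cmod (coeff q i) * max 1 (cmod u) ^ degree q)"
  proof (rule sum_mono)
    fix i assume i: "i \<in> {..degree q}"
    have "cmod u ^ i \<le> max 1 (cmod u) ^ i" by (intro power_mono) auto
    also have "\<dots> \<le> max 1 (cmod u) ^ degree q" using i by (intro power_increasing) auto
    finally show "cmod (coeff q i * u ^ i) \<le> cmod (coeff q i) * max 1 (cmod u) ^ degree q"
      by (simp add: norm_mult norm_power mult_left_mono)
  qed
  also have "\<dots> = (\<Sum>i\<le>degree q. cmod (coeff q i)) * max 1 (cmod u) ^ degree q"
    by (simp add: sum_distrib_right)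
  also have "\<dots> \<le> max 1 (\<Sum>i\<le>degree q. cmod (coeff q i)) * max 1 (cmod u) ^ degree q"
    by (intro mult_right_mono) auto
  finally show ?thesis .
qed

lemma arch_lower:
  assumes q0: "q \<noteq> 0" and d1: "degree q \<ge> 1"
  shows "max 1 (cmod u) ^ degree q \<le>
    (max 1 (Max (cmod ` {z. poly q z = 0}) + cmod (lead_coeff q) powr (- 1 / real (degree q)))) ^ degree q
     * max 1 (cmod (poly q u))"
proof -
  define d where "d = degree q"
  define A where "A = Max (cmod ` {z. poly q z = 0})"
  define B where "B = cmod (lead_coeff q) powr (- 1 / real d)"
  define c where "c = max 1 (A + B)"
  obtain r where r: "\<And>u. poly q u = lead_coeff q * (\<Prod>i<d. u - r i)"
    "\<And>i. i < d \<Longrightarrow> poly q (r i) = 0"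
    using poly_decomp_roots[OF q0] unfolding d_def by blast
  have fin: "finite {z. poly q z = 0}" using q0 by (rule poly_roots_finite)
  have d0: "d > 0" using d1 by (simp add: d_def)
  have rootA: "cmod z \<le> A" if "poly q z = 0" for z unfolding A_def using fin that by auto
  have A0: "A \<ge> 0" using rootA[OF r(2)[OF d0]] by (meson norm_ge_zero order_trans)
  have c1: "c \<ge> 1" by (simp add: c_def)
  have lc0: "lead_coeff q \<noteq> 0" using q0 by simp
  have Wlc: "cmod (lead_coeff q) > 0" using lc0 by simp
  have B0: "B > 0" using Wlc by (simp add: B_def)
  have Bd: "B ^ d * cmod (lead_coeff q) = 1" unfolding B_def by (rule powr_d_inv[OF Wlc d0])
  have main: "max 1 (cmod u) ^ d \<le> c ^ d * max 1 (cmod (poly q u))"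
  proof (cases "cmod u \<le> c")
    case True
    have "max 1 (cmod u) ^ d \<le> c ^ d" using True c1 by (intro power_mono) auto
    also have "\<dots> \<le> c ^ d * max 1 (cmod (poly q u))" using c1 by simp
    finally show "max 1 (cmod u) ^ d \<le> c ^ d * max 1 (cmod (poly q u))" .
  next
    case False
    have uA: "cmod u > A + B" using False by (simp add: c_def)
    have ge: "cmod (u - r i) \<ge> cmod u - A" if "i < d" for i
    proof -
      have "cmod (r i) \<le> A" using rootA r(2) that by blast
      moreover have "cmod u - cmod (r i) \<le> cmod (u - r i)" by (rule norm_triangle_ineq2)
      ultimately show ?thesis by simp
    qed
    have "cmod (poly q u) = cmod (lead_coeff q) * (\<Prod>i<d. cmod (u - r i))"
      unfolding r(1) by (simp add: norm_mult prod_norm)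
    also have "\<dots> \<ge> cmod (lead_coeff q) * (cmod u - A) ^ d"
    proof -
      have "(\<Prod>i<d. cmod u - A) \<le> (\<Prod>i<d. cmod (u - r i))"
        using ge uA B0 by (intro prod_mono) auto
      then show ?thesis using Wlc by (simp add: mult_left_mono)
    qed
    finally have P: "cmod (poly q u) \<ge> cmod (lead_coeff q) * (cmod u - A) ^ d" .
    have key: "(A + B) * (cmod u - A) \<ge> B * cmod u"
    proof -
      have "(A + B) * (cmod u - A) - B * cmod u = A * (cmod u - A - B)" by (simp add: algebra_simps)
      also have "\<dots> \<ge> 0" using A0 uA by simp
      finally show ?thesis by simp
    qed
    have "(B * cmod u) ^ d \<le> ((A + B) * (cmod u - A)) ^ d"
      using key B0 by (intro power_mono) auto
    also have "\<dots> = (A + B) ^ d * ((cmod u - A) ^ d)" by (simp add: power_mult_distrib)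
    also have "\<dots> \<le> (A + B) ^ d * (B ^ d * cmod (poly q u))"
    proof (rule mult_left_mono)
      have "B ^ d * (cmod (lead_coeff q) * (cmod u - A) ^ d) \<le> B ^ d * cmod (poly q u)"
        using P B0 by (intro mult_left_mono) auto
      then show "(cmod u - A) ^ d \<le> B ^ d * cmod (poly q u)"
        using Bd by (simp add: mult.assoc[symmetric])
    qed (use A0 B0 in auto)
    finally have "B ^ d * cmod u ^ d \<le> B ^ d * ((A + B) ^ d * cmod (poly q u))"
      by (simp add: power_mult_distrib mult_ac)
    then have "cmod u ^ d \<le> (A + B) ^ d * cmod (poly q u)"
      using B0 by (simp add: mult_le_cancel_left)
    also have "\<dots> \<le> c ^ d * cmod (poly q u)"
      by (intro mult_right_mono power_mono) (use A0 B0 in \<open>auto simp: c_def\<close>)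
    also have "\<dots> \<le> c ^ d * max 1 (cmod (poly q u))" using c1 by (intro mult_left_mono) auto
    finally show "max 1 (cmod u) ^ d \<le> c ^ d * max 1 (cmod (poly q u))"
      using False c1 by simp
  qed
  show ?thesis using main unfolding d_def A_def B_def c_def .
qed



lemma poly_map_of_rat: "poly (map_poly (of_rat :: rat \<Rightarrow> complex) p) (of_rat y) = of_rat (poly p y)"
  by (induction p) (auto simp: map_poly_pCons of_rat_add of_rat_mult)

lemma ln_max_power: "(t::real) \<ge> 0 \<Longrightarrow> ln (max 1 (t ^ n)) = real n * ln (max 1 t)"
proof -
  assume t: "t \<ge> 0"
  have "max 1 (t ^ n) = max 1 t ^ n"
  proof (cases "t \<le> 1")
    case True then have "t ^ n \<le> 1" using t by (simp add: power_le_one)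
    then show ?thesis using True by simp
  next
    case False then show ?thesis by (simp add: max_def one_le_power)
  qed
  then show ?thesis by (simp add: ln_realpow)
qed

lemma ln_max_mult: "(s::real) \<ge> 0 \<Longrightarrow> t \<ge> 0 \<Longrightarrow> ln (max 1 (s * t)) \<le> ln (max 1 s) + ln (max 1 t)"
proof -
  assume st: "s \<ge> 0" "t \<ge> 0"
  have "s * t \<le> max 1 s * max 1 t" using st by (intro mult_mono) auto
  moreover have "1 * 1 \<le> max 1 s * max 1 t" by (intro mult_mono) auto
  ultimately have "max 1 (s * t) \<le> max 1 s * max 1 t" by simp
  then have "ln (max 1 (s * t)) \<le> ln (max 1 s * max 1 t)" by simp
  also have "\<dots> = ln (max 1 s) + ln (max 1 t)" by (intro ln_mult_pos) auto
  finally show ?thesis .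
qed

lemma cmod_of_rat: "cmod (of_rat q) = \<bar>real_of_rat q\<bar>"
proof -
  obtain a b where ab: "quotient_of q = (a, b)" by (cases "quotient_of q")
  have q: "q = of_int a / of_int b" by (rule quotient_of_div[OF ab])
  show ?thesis unfolding q by (simp add: of_rat_divide norm_divide abs_divide)
qed

lemma one_le_mult2: "(1::real) \<le> a \<Longrightarrow> 1 \<le> b \<Longrightarrow> 1 \<le> a * b"
  using mult_mono[of 1 a 1 b] by simp

locale setting =
  fixes \<phi> :: "rat poly" and e :: nat and \<gamma> :: complex and w :: "nat \<Rightarrow> complex \<Rightarrow> real"
  assumes deg2: "degree \<phi> \<ge> 2" and e1: "e \<ge> 1"
    and gam: "\<gamma> ^ e = of_rat (lead_coeff \<phi>)"
    and NAw: "\<And>p. prime p \<Longrightarrow> nonarch_ext_abs p (w p)"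
begin

lemma phi0: "\<phi> \<noteq> 0" using deg2 by auto

lemma a0: "lead_coeff \<phi> \<noteq> 0" using phi0 by simp

lemma gam0: "\<gamma> \<noteq> 0"
  using gam a0 e1 by (metis of_rat_eq_0_iff power_0_left le_zero_eq not_one_le_zero)

lemma alg_gam: "algebraic \<gamma>"
proof (rule algebraicI'[of "monom 1 e - [:of_rat (lead_coeff \<phi>):]"])
  show "coeff (monom 1 e - [:of_rat (lead_coeff \<phi>):]) i \<in> \<rat>" for i
    by (auto simp: coeff_monom coeff_pCons split: nat.splits)
  have "coeff [:of_rat (lead_coeff \<phi>):] e = (0::complex)" using e1 by (cases e) auto
  then have ce: "coeff (monom 1 e - [:of_rat (lead_coeff \<phi>):]) e = (1::complex)" by (simp add: coeff_monom)
  show "monom 1 e - [:of_rat (lead_coeff \<phi>):] \<noteq> (0::complex poly)"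
  proof
    assume "monom 1 e - [:of_rat (lead_coeff \<phi>):] = (0::complex poly)"
    with ce show False by simp
  qed
  show "poly (monom 1 e - [:of_rat (lead_coeff \<phi>):]) \<gamma> = 0" using gam by (simp add: poly_monom)
qed

lemma alg_igam: "algebraic (inverse \<gamma>)" using alg_gam by (rule algebraic_inverse)

lemma coeff_psi: "coeff (psi_poly \<phi> \<gamma>) i = \<gamma> * inverse \<gamma> ^ i * of_rat (coeff \<phi> i)"
  by (simp add: psi_poly_def coeff_pcompose_linear coeff_map_poly)

lemma coeff_psi0: "coeff (psi_poly \<phi> \<gamma>) i = 0 \<longleftrightarrow> coeff \<phi> i = 0"
  using gam0 by (simp add: coeff_psi)

lemma deg_psi: "degree (psi_poly \<phi> \<gamma>) = degree \<phi>"
proof (rule antisym)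
  show "degree (psi_poly \<phi> \<gamma>) \<le> degree \<phi>"
    by (rule degree_le) (auto simp: coeff_psi0 coeff_eq_0)
  show "degree \<phi> \<le> degree (psi_poly \<phi> \<gamma>)"
    by (rule le_degree) (simp add: coeff_psi0 phi0)
qed

lemma psi0: "psi_poly \<phi> \<gamma> \<noteq> 0"
  using deg_psi deg2 by auto

lemma lc_psi: "lead_coeff (psi_poly \<phi> \<gamma>) = \<gamma> * inverse \<gamma> ^ degree \<phi> * of_rat (lead_coeff \<phi>)"
  by (simp add: deg_psi coeff_psi)

lemma alg_coeff_psi: "algebraic (coeff (psi_poly \<phi> \<gamma>) i)"
  unfolding coeff_psi by (intro alg_closed alg_power alg_gam alg_igam alg_of_rat)

lemma poly_psi_gen: "poly (psi_poly \<phi> \<gamma>) z = \<gamma> * poly (map_poly of_rat \<phi>) (inverse \<gamma> * z)"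
  by (simp add: psi_poly_def poly_pcompose mult.commute)

lemma poly_psi: "poly (psi_poly \<phi> \<gamma>) (\<gamma> * of_rat y) = \<gamma> * of_rat (poly \<phi> y)"
  using gam0 by (simp add: poly_psi_gen poly_map_of_rat mult.assoc[symmetric])

lemma alg_root_psi:
  assumes "poly (psi_poly \<phi> \<gamma>) z = 0" shows "algebraic z"
proof -
  have "poly (map_poly of_rat \<phi>) (inverse \<gamma> * z) = 0" using assms gam0 by (simp add: poly_psi_gen)
  moreover have "map_poly (of_rat :: rat \<Rightarrow> complex) \<phi> \<noteq> 0" using phi0 by (simp add: map_poly_eq_0_iff)
  moreover have "coeff (map_poly (of_rat :: rat \<Rightarrow> complex) \<phi>) i \<in> \<rat>" for i by (simp add: coeff_map_poly)
  ultimately have "algebraic (inverse \<gamma> * z)" by (intro algebraicI') auto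
  then have "algebraic (\<gamma> * (inverse \<gamma> * z))" by (rule alg_closed(1)[OF alg_gam])
  moreover have "\<gamma> * (inverse \<gamma> * z) = z" using gam0 by (simp add: mult.assoc[symmetric])
  ultimately show ?thesis by simp
qed

lemma alg_gy: "algebraic (\<gamma> * of_rat y)" by (intro alg_closed alg_gam alg_of_rat)

definition lam :: "nat \<Rightarrow> rat \<Rightarrow> real" where
  "lam p y = ln (max 1 (w p (\<gamma> * of_rat y)))"

definition lamA :: "rat \<Rightarrow> real" where
  "lamA y = ln (max 1 (cmod (\<gamma> * of_rat y)))"

lemma W_gam_pow: "prime p \<Longrightarrow> w p \<gamma> ^ e = padic_abs p (lead_coeff \<phi>)"
  using W_power[OF NAw alg_gam, of p e] gam W_rat[OF NAw, of p] by simp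

lemma lam_e: "prime p \<Longrightarrow> real e * lam p y = ln (max 1 (padic_abs p (lead_coeff \<phi> * y ^ e)))"
proof -
  assume p: "prime p"
  have "w p (\<gamma> * of_rat y) ^ e = w p ((\<gamma> * of_rat y) ^ e)" using W_power[OF NAw[OF p] alg_gy] by simp
  also have "(\<gamma> * of_rat y) ^ e = of_rat (lead_coeff \<phi> * y ^ e)"
    by (simp add: power_mult_distrib gam of_rat_mult of_rat_power)
  finally have "w p (\<gamma> * of_rat y) ^ e = padic_abs p (lead_coeff \<phi> * y ^ e)" using W_rat[OF NAw[OF p]] by simp
  moreover have "ln (max 1 (w p (\<gamma> * of_rat y) ^ e)) = real e * ln (max 1 (w p (\<gamma> * of_rat y)))"
    by (rule ln_max_power[OF W_nonneg[OF NAw[OF p] alg_gy[of y]]])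
  ultimately show ?thesis unfolding lam_def by simp
qed

lemma lamA_e: "real e * lamA y = ln (max 1 \<bar>real_of_rat (lead_coeff \<phi> * y ^ e)\<bar>)"
proof -
  have "cmod (\<gamma> * of_rat y) ^ e = cmod ((\<gamma> * of_rat y) ^ e)" by (simp add: norm_power)
  also have "(\<gamma> * of_rat y) ^ e = of_rat (lead_coeff \<phi> * y ^ e)"
    by (simp add: power_mult_distrib gam of_rat_mult of_rat_power)
  also have "cmod (of_rat (lead_coeff \<phi> * y ^ e)) = \<bar>real_of_rat (lead_coeff \<phi> * y ^ e)\<bar>"
    by (rule cmod_of_rat)
  finally have eq: "cmod (\<gamma> * of_rat y) ^ e = \<bar>real_of_rat (lead_coeff \<phi> * y ^ e)\<bar>" .
  have "ln (max 1 (cmod (\<gamma> * of_rat y) ^ e)) = real e * ln (max 1 (cmod (\<gamma> * of_rat y)))"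
    by (rule ln_max_power) simp
  with eq show ?thesis unfolding lamA_def by simp
qed

lemma lam_upper: "prime p \<Longrightarrow> lam p (poly \<phi> y) \<le> real (degree \<phi>) * lam p y + ln (C_nonarch (w p) \<phi> \<gamma>)"
proof -
  assume p: "prime p"
  let ?W = "w p" and ?q = "psi_poly \<phi> \<gamma>" and ?u = "\<gamma> * of_rat y"
  let ?C = "max 1 (Max ((\<lambda>i. ?W (coeff ?q i)) ` {..degree ?q}))"
  have "?W (poly ?q ?u) \<le> ?C * max 1 (?W ?u) ^ degree ?q"
    by (rule nonarch_upper[OF NAw[OF p] alg_coeff_psi alg_gy])
  moreover have "1 \<le> ?C * max 1 (?W ?u) ^ degree ?q"
    by (rule one_le_mult2) (auto simp: one_le_power)
  ultimately have "max 1 (?W (poly ?q ?u)) \<le> ?C * max 1 (?W ?u) ^ degree ?q" by simp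
  then have "ln (max 1 (?W (poly ?q ?u))) \<le> ln (?C * max 1 (?W ?u) ^ degree ?q)" by simp
  also have "\<dots> = ln ?C + real (degree ?q) * ln (max 1 (?W ?u))"
    by (simp add: ln_mult_pos ln_realpow)
  finally show ?thesis unfolding lam_def poly_psi[symmetric] C_nonarch_def Let_def deg_psi by simp
qed

lemma lam_lower: "prime p \<Longrightarrow> real (degree \<phi>) * lam p y - real (degree \<phi>) * ln (c_nonarch (w p) \<phi> \<gamma>) \<le> lam p (poly \<phi> y)"
proof -
  assume p: "prime p"
  let ?W = "w p" and ?q = "psi_poly \<phi> \<gamma>" and ?u = "\<gamma> * of_rat y"
  let ?c = "max 1 (max (Max (?W ` {z. poly ?q z = 0})) (?W (lead_coeff ?q) powr (- 1 / real (degree ?q))))"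
  have "max 1 (?W ?u) ^ degree ?q \<le> ?c ^ degree ?q * max 1 (?W (poly ?q ?u))"
    using deg_psi deg2
    by (intro nonarch_lower[OF NAw[OF p] psi0 _ alg_coeff_psi alg_root_psi alg_gy]) auto
  then have "ln (max 1 (?W ?u) ^ degree ?q) \<le> ln (?c ^ degree ?q * max 1 (?W (poly ?q ?u)))"
    by (simp add: one_le_power)
  then have "real (degree ?q) * ln (max 1 (?W ?u)) \<le> real (degree ?q) * ln ?c + ln (max 1 (?W (poly ?q ?u)))"
    by (simp add: ln_mult_pos ln_realpow)
  then show ?thesis unfolding lam_def poly_psi[symmetric] c_nonarch_def Let_def deg_psi by simp
qed

lemma lamA_upper: "lamA (poly \<phi> y) \<le> real (degree \<phi>) * lamA y + ln (C_arch \<phi> \<gamma>)"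
proof -
  let ?q = "psi_poly \<phi> \<gamma>" and ?u = "\<gamma> * of_rat y"
  let ?C = "max 1 (\<Sum>i\<le>degree ?q. cmod (coeff ?q i))"
  have "cmod (poly ?q ?u) \<le> ?C * max 1 (cmod ?u) ^ degree ?q" by (rule arch_upper)
  moreover have "1 \<le> ?C * max 1 (cmod ?u) ^ degree ?q"
    by (rule one_le_mult2) (auto simp: one_le_power)
  ultimately have "max 1 (cmod (poly ?q ?u)) \<le> ?C * max 1 (cmod ?u) ^ degree ?q" by simp
  then have "ln (max 1 (cmod (poly ?q ?u))) \<le> ln (?C * max 1 (cmod ?u) ^ degree ?q)" by simp
  also have "\<dots> = ln ?C + real (degree ?q) * ln (max 1 (cmod ?u))"
    by (simp add: ln_mult_pos ln_realpow)
  finally show ?thesis unfolding lamA_def poly_psi[symmetric] C_arch_def Let_def deg_psi by simp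
qed

lemma lamA_lower: "real (degree \<phi>) * lamA y - real (degree \<phi>) * ln (c_arch \<phi> \<gamma>) \<le> lamA (poly \<phi> y)"
proof -
  let ?q = "psi_poly \<phi> \<gamma>" and ?u = "\<gamma> * of_rat y"
  let ?c = "max 1 (Max (cmod ` {z. poly ?q z = 0}) + cmod (lead_coeff ?q) powr (- 1 / real (degree ?q)))"
  have "max 1 (cmod ?u) ^ degree ?q \<le> ?c ^ degree ?q * max 1 (cmod (poly ?q ?u))"
    using deg_psi deg2 by (intro arch_lower[OF psi0]) auto
  then have "ln (max 1 (cmod ?u) ^ degree ?q) \<le> ln (?c ^ degree ?q * max 1 (cmod (poly ?q ?u)))"
    by (simp add: one_le_power)
  then have "real (degree ?q) * ln (max 1 (cmod ?u)) \<le> real (degree ?q) * ln ?c + ln (max 1 (cmod (poly ?q ?u)))"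
    by (simp add: ln_mult_pos ln_realpow)
  then show ?thesis unfolding lamA_def poly_psi[symmetric] c_arch_def Let_def deg_psi by simp
qed

end


context setting
begin

lemma padic_gt1_den:
  assumes p: "prime p" and g: "padic_abs p q > 1"
  shows "p \<in> den_primes q"
proof (rule ccontr)
  assume "p \<notin> den_primes q"
  then have "\<not> int p dvd snd (quotient_of q)" using p by (simp add: den_primes_def)
  then have "multiplicity (int p) (snd (quotient_of q)) = 0" by (rule not_dvd_imp_multiplicity_0)
  then have "ln (max 1 (padic_abs p q)) = 0" using padic_ln[OF p, of q] by simp
  with g show False by simp
qed

lemma padic_inv: "prime p \<Longrightarrow> padic_abs p (inverse q) = inverse (padic_abs p q)"
proof -
  assume p: "prime p"
  have "padic_abs p (inverse q) = w p (of_rat (inverse q))" using W_rat[OF NAw[OF p]] by simp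
  also have "\<dots> = w p (inverse (of_rat q))" by (simp add: of_rat_inverse)
  also have "\<dots> = inverse (padic_abs p q)" using W_inverse[OF NAw[OF p], of "of_rat q"] W_rat[OF NAw[OF p]] by simp
  finally show ?thesis .
qed

lemma padic_pos: "prime p \<Longrightarrow> q \<noteq> 0 \<Longrightarrow> padic_abs p q > 0"
  using W_nonneg[OF NAw, of p "of_rat q"] W_eq0[OF NAw, of p "of_rat q"] by (simp add: W_rat[OF NAw])

lemma padic_zero: "padic_abs p 0 = 0" by (simp add: padic_abs_def)

lemma finite_bad: "finite {p. bad_prime \<phi> p}"
proof -
  let ?a = "lead_coeff \<phi>"
  have "{p. bad_prime \<phi> p} \<subseteq> (\<Union>i\<le>degree \<phi>. den_primes (coeff \<phi> i)) \<union> den_primes ?a \<union> den_primes (inverse ?a)"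
  proof
    fix p assume "p \<in> {p. bad_prime \<phi> p}"
    then have p: "prime p" and b: "(\<exists>i. padic_abs p (coeff \<phi> i) > 1) \<or> padic_abs p ?a \<noteq> 1"
      by (auto simp: bad_prime_def)
    from b show "p \<in> (\<Union>i\<le>degree \<phi>. den_primes (coeff \<phi> i)) \<union> den_primes ?a \<union> den_primes (inverse ?a)"
    proof
      assume "\<exists>i. padic_abs p (coeff \<phi> i) > 1"
      then obtain i where i: "padic_abs p (coeff \<phi> i) > 1" by blast
      have "i \<le> degree \<phi>"
      proof (rule ccontr)
        assume "\<not> i \<le> degree \<phi>"
        then have "coeff \<phi> i = 0" by (simp add: coeff_eq_0)
        with i show False by (simp add: padic_zero)
      qed
      with padic_gt1_den[OF p i] show ?thesis by blast
    next
      assume ne: "padic_abs p ?a \<noteq> 1"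
      show ?thesis
      proof (cases "padic_abs p ?a > 1")
        case True then show ?thesis using padic_gt1_den[OF p] by blast
      next
        case False
        with ne have lt: "padic_abs p ?a < 1" by simp
        have pos: "padic_abs p ?a > 0" using padic_pos[OF p a0] .
        have "padic_abs p (inverse ?a) > 1" unfolding padic_inv[OF p] using lt pos
          by (simp add: one_less_inverse)
        then show ?thesis using padic_gt1_den[OF p] by blast
      qed
    qed
  qed
  moreover have "finite ((\<Union>i\<le>degree \<phi>. den_primes (coeff \<phi> i)) \<union> den_primes ?a \<union> den_primes (inverse ?a))"
    by (simp add: finite_den_primes)
  ultimately show ?thesis by (rule finite_subset)
qed

lemma good_facts:
  assumes p: "prime p" and nb: "\<not> bad_prime \<phi> p"
  shows "w p \<gamma> = 1" "\<And>i. w p (coeff (psi_poly \<phi> \<gamma>) i) = padic_abs p (coeff \<phi> i)"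
    "\<And>i. padic_abs p (coeff \<phi> i) \<le> 1" "padic_abs p (lead_coeff \<phi>) = 1"
proof -
  show c1: "padic_abs p (coeff \<phi> i) \<le> 1" for i using nb p by (auto simp: bad_prime_def not_less)
  show a1: "padic_abs p (lead_coeff \<phi>) = 1" using nb p by (auto simp: bad_prime_def)
  have "w p \<gamma> ^ e = 1 ^ e" using W_gam_pow[OF p] a1 by simp
  then show g1: "w p \<gamma> = 1" using e1 W_nonneg[OF NAw[OF p] alg_gam]
    by (subst (asm) power_eq_iff_eq_base) auto
  have ig: "w p (inverse \<gamma>) = 1" using W_inverse[OF NAw[OF p] alg_gam] g1 by simp
  show "w p (coeff (psi_poly \<phi> \<gamma>) i) = padic_abs p (coeff \<phi> i)" for i
    unfolding coeff_psi
    by (simp add: W_mult[OF NAw[OF p]] W_power[OF NAw[OF p]] alg_gam alg_igam alg_power alg_closed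
        g1 ig W_rat[OF NAw[OF p]])
qed

lemma good_C:
  assumes p: "prime p" and nb: "\<not> bad_prime \<phi> p"
  shows "C_nonarch (w p) \<phi> \<gamma> = 1"
proof -
  have "Max ((\<lambda>i. w p (coeff (psi_poly \<phi> \<gamma>) i)) ` {..degree (psi_poly \<phi> \<gamma>)}) \<le> 1"
    using good_facts[OF p nb] by (subst Max_le_iff) auto
  then show ?thesis by (simp add: C_nonarch_def Let_def)
qed

lemma good_c:
  assumes p: "prime p" and nb: "\<not> bad_prime \<phi> p"
  shows "c_nonarch (w p) \<phi> \<gamma> = 1"
proof -
  let ?q = "psi_poly \<phi> \<gamma>" and ?W = "w p"
  define d where "d = degree ?q"
  have d2: "d \<ge> 2" using deg_psi deg2 by (simp add: d_def)
  note NA = NAw[OF p]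
  have lc: "?W (lead_coeff ?q) = 1" using good_facts(2,4)[OF p nb] deg_psi by simp
  have root_le: "?W z \<le> 1" if z: "poly ?q z = 0" for z
  proof (rule ccontr)
    assume "\<not> ?W z \<le> 1"
    then have gt: "?W z > 1" by simp
    have az: "algebraic z" by (rule alg_root_psi[OF z])
    define S where "S = (\<Sum>i<d. coeff ?q i * z ^ i)"
    have "poly ?q z = (\<Sum>i<Suc d. coeff ?q i * z ^ i)"
      unfolding poly_altdef d_def lessThan_Suc_atMost ..
    also have "\<dots> = S + lead_coeff ?q * z ^ d" by (simp add: S_def d_def)
    finally have "lead_coeff ?q * z ^ d = - S" using z by (simp add: add_eq_0_iff add.commute)
    then have "?W (lead_coeff ?q * z ^ d) = ?W S"
      using W_minus[OF NA] by (simp add: S_def alg_sum alg_closed alg_coeff_psi alg_power az)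
    moreover have "?W (lead_coeff ?q * z ^ d) = ?W z ^ d"
      using lc by (simp add: W_mult[OF NA] W_power[OF NA] alg_coeff_psi alg_power az)
    moreover have "?W S \<le> ?W z ^ (d - 1)" unfolding S_def
    proof (rule W_sum_le[OF NA])
      fix i assume i: "i \<in> {..<d}"
      show "algebraic (coeff ?q i * z ^ i)" by (intro alg_closed alg_power alg_coeff_psi az)
      have "?W (coeff ?q i * z ^ i) = ?W (coeff ?q i) * ?W z ^ i"
        by (simp add: W_mult[OF NA] W_power[OF NA] alg_coeff_psi alg_power az)
      also have "\<dots> \<le> 1 * ?W z ^ (d - 1)"
      proof (rule mult_mono)
        show "?W (coeff ?q i) \<le> 1" using good_facts(2,3)[OF p nb] by simp
        show "?W z ^ i \<le> ?W z ^ (d - 1)" using i gt by (intro power_increasing) auto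
      qed (use gt in auto)
      finally show "?W (coeff ?q i * z ^ i) \<le> ?W z ^ (d - 1)" by simp
    qed (use gt in auto)
    moreover have "?W z ^ (d - 1) < ?W z ^ d" using gt d2 by (intro power_strict_increasing) auto
    ultimately show False by simp
  qed
  obtain r where r: "\<And>u. poly ?q u = lead_coeff ?q * (\<Prod>i<degree ?q. u - r i)"
    "\<And>i. i < degree ?q \<Longrightarrow> poly ?q (r i) = 0"
    using poly_decomp_roots[OF psi0] by blast
  have ne: "{z. poly ?q z = 0} \<noteq> {}" using r(2)[of 0] d2 by (auto simp: d_def)
  have fin: "finite {z. poly ?q z = 0}" using psi0 by (rule poly_roots_finite)
  have "Max (?W ` {z. poly ?q z = 0}) \<le> 1"
    using ne fin root_le by (subst Max_le_iff) auto
  then show ?thesis by (simp add: c_nonarch_def Let_def lc)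
qed

definition SC :: real where
  "SC = ln (C_arch \<phi> \<gamma>) + (\<Sum>p\<in>{p. bad_prime \<phi> p}. ln (C_nonarch (w p) \<phi> \<gamma>))"

definition Sc :: real where
  "Sc = ln (c_arch \<phi> \<gamma>) + (\<Sum>p\<in>{p. bad_prime \<phi> p}. ln (c_nonarch (w p) \<phi> \<gamma>))"

definition H :: "rat \<Rightarrow> real" where
  "H y = rat_height (lead_coeff \<phi> * y ^ e) / real e"

lemma H_decomp:
  assumes "finite P" "\<And>p. p \<in> P \<Longrightarrow> prime p" "den_primes (lead_coeff \<phi> * y ^ e) \<subseteq> P"
  shows "H y = lamA y + (\<Sum>p\<in>P. lam p y)"
proof -
  have "rat_height (lead_coeff \<phi> * y ^ e) = ln (max 1 \<bar>real_of_rat (lead_coeff \<phi> * y ^ e)\<bar>)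
      + (\<Sum>p\<in>P. ln (max 1 (padic_abs p (lead_coeff \<phi> * y ^ e))))"
    by (rule height_decomp[OF assms])
  also have "ln (max 1 \<bar>real_of_rat (lead_coeff \<phi> * y ^ e)\<bar>) = real e * lamA y"
    by (rule lamA_e[symmetric])
  also have "(\<Sum>p\<in>P. ln (max 1 (padic_abs p (lead_coeff \<phi> * y ^ e)))) = (\<Sum>p\<in>P. real e * lam p y)"
    using assms(2) by (intro sum.cong) (simp_all add: lam_e)
  finally have "rat_height (lead_coeff \<phi> * y ^ e) = real e * lamA y + (\<Sum>p\<in>P. real e * lam p y)" .
  then have "rat_height (lead_coeff \<phi> * y ^ e) = real e * (lamA y + (\<Sum>p\<in>P. lam p y))"
    by (simp add: sum_distrib_left[symmetric] algebra_simps)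
  moreover have "real e \<noteq> 0" using e1 by simp
  ultimately show ?thesis unfolding H_def by simp
qed

lemma bad_prime_prime: "bad_prime \<phi> p \<Longrightarrow> prime p" by (simp add: bad_prime_def)

lemma step_bounds:
  "H (poly \<phi> y) \<le> real (degree \<phi>) * H y + SC"
  "real (degree \<phi>) * H y - real (degree \<phi>) * Sc \<le> H (poly \<phi> y)"
proof -
  define P where "P = {p. bad_prime \<phi> p} \<union> den_primes (lead_coeff \<phi> * y ^ e)
     \<union> den_primes (lead_coeff \<phi> * (poly \<phi> y) ^ e)"
  have finP: "finite P" by (simp add: P_def finite_bad finite_den_primes)
  have Pp: "\<And>p. p \<in> P \<Longrightarrow> prime p" by (auto simp: P_def den_primes_def bad_prime_def)
  have badP: "{p. bad_prime \<phi> p} \<subseteq> P" by (auto simp: P_def)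
  have H1: "H y = lamA y + (\<Sum>p\<in>P. lam p y)" by (rule H_decomp[OF finP Pp]) (auto simp: P_def)
  have H2: "H (poly \<phi> y) = lamA (poly \<phi> y) + (\<Sum>p\<in>P. lam p (poly \<phi> y))"
    by (rule H_decomp[OF finP Pp]) (auto simp: P_def)
  let ?d = "real (degree \<phi>)"
  have sC: "(\<Sum>p\<in>P. ln (C_nonarch (w p) \<phi> \<gamma>)) = (\<Sum>p\<in>{p. bad_prime \<phi> p}. ln (C_nonarch (w p) \<phi> \<gamma>))"
    by (rule sum.mono_neutral_right[OF finP badP]) (auto simp: good_C Pp)
  have sc: "(\<Sum>p\<in>P. ln (c_nonarch (w p) \<phi> \<gamma>)) = (\<Sum>p\<in>{p. bad_prime \<phi> p}. ln (c_nonarch (w p) \<phi> \<gamma>))"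
    by (rule sum.mono_neutral_right[OF finP badP]) (auto simp: good_c Pp)
  have "(\<Sum>p\<in>P. lam p (poly \<phi> y)) \<le> (\<Sum>p\<in>P. ?d * lam p y + ln (C_nonarch (w p) \<phi> \<gamma>))"
    by (intro sum_mono lam_upper Pp)
  also have "\<dots> = ?d * (\<Sum>p\<in>P. lam p y) + (\<Sum>p\<in>P. ln (C_nonarch (w p) \<phi> \<gamma>))"
    by (simp add: sum.distrib sum_distrib_left)
  finally have A: "(\<Sum>p\<in>P. lam p (poly \<phi> y)) \<le> ?d * (\<Sum>p\<in>P. lam p y) + (\<Sum>p\<in>P. ln (C_nonarch (w p) \<phi> \<gamma>))" .
  show "H (poly \<phi> y) \<le> ?d * H y + SC"
    unfolding H1 H2 SC_def using A lamA_upper[of y] sC by (simp add: algebra_simps)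
  have "?d * (\<Sum>p\<in>P. lam p y) - ?d * (\<Sum>p\<in>P. ln (c_nonarch (w p) \<phi> \<gamma>))
        = (\<Sum>p\<in>P. ?d * lam p y - ?d * ln (c_nonarch (w p) \<phi> \<gamma>))"
    by (simp add: sum_subtractf sum_distrib_left)
  also have "\<dots> \<le> (\<Sum>p\<in>P. lam p (poly \<phi> y))"
    by (intro sum_mono lam_lower Pp)
  finally have B: "?d * (\<Sum>p\<in>P. lam p y) - ?d * (\<Sum>p\<in>P. ln (c_nonarch (w p) \<phi> \<gamma>)) \<le> (\<Sum>p\<in>P. lam p (poly \<phi> y))" .
  show "?d * H y - ?d * Sc \<le> H (poly \<phi> y)"
    unfolding H1 H2 Sc_def using B lamA_lower[of y] sc by (simp add: algebra_simps)
qed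

end


lemma rat_height_nonneg: "rat_height q \<ge> 0"
proof -
  obtain m n where mn: "quotient_of q = (m, n)" by (cases "quotient_of q")
  have "n > 0" using quotient_of_denom_pos[OF mn] .
  then have "real_of_int (max \<bar>m\<bar> n) \<ge> 1" by linarith
  then show ?thesis by (simp add: rat_height_def mn)
qed

context setting
begin

abbreviation LA :: "rat \<Rightarrow> real" where "LA q \<equiv> ln (max 1 \<bar>real_of_rat q\<bar>)"
abbreviation Lp :: "nat \<Rightarrow> rat \<Rightarrow> real" where "Lp p q \<equiv> ln (max 1 (padic_abs p q))"

lemma local_gap:
  fixes s t u s' :: real
  assumes "s \<ge> 0" "t \<ge> 0" "u = s * t ^ e" "s' * u = t ^ e" "s' \<ge> 0"
  shows "ln (max 1 u) \<le> ln (max 1 s) + real e * ln (max 1 t)"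
    "real e * ln (max 1 t) \<le> ln (max 1 s') + ln (max 1 u)"
proof -
  have te: "ln (max 1 (t ^ e)) = real e * ln (max 1 t)" by (rule ln_max_power[OF assms(2)])
  show "ln (max 1 u) \<le> ln (max 1 s) + real e * ln (max 1 t)"
    unfolding assms(3) te[symmetric] using assms(1,2) by (intro ln_max_mult) auto
  have u0: "u \<ge> 0" unfolding assms(3) using assms(1,2) by simp
  show "real e * ln (max 1 t) \<le> ln (max 1 s') + ln (max 1 u)"
    unfolding te[symmetric] assms(4)[symmetric] using assms(5) u0 by (intro ln_max_mult) auto
qed

lemma hgap: "\<bar>H y - rat_height y\<bar> \<le> rat_height (lead_coeff \<phi>) + rat_height (inverse (lead_coeff \<phi>))"
proof -
  let ?a = "lead_coeff \<phi>"
  let ?b = "?a * y ^ e"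
  define P where "P = den_primes ?a \<union> den_primes (inverse ?a) \<union> den_primes y \<union> den_primes ?b"
  have finP: "finite P" by (simp add: P_def finite_den_primes)
  have Pp: "\<And>p. p \<in> P \<Longrightarrow> prime p" by (auto simp: P_def den_primes_def)
  have hA: "rat_height ?a = LA ?a + (\<Sum>p\<in>P. Lp p ?a)" by (rule height_decomp[OF finP Pp]) (auto simp: P_def)
  have hI: "rat_height (inverse ?a) = LA (inverse ?a) + (\<Sum>p\<in>P. Lp p (inverse ?a))"
    by (rule height_decomp[OF finP Pp]) (auto simp: P_def)
  have hY: "rat_height y = LA y + (\<Sum>p\<in>P. Lp p y)" by (rule height_decomp[OF finP Pp]) (auto simp: P_def)
  have hB: "rat_height ?b = LA ?b + (\<Sum>p\<in>P. Lp p ?b)" by (rule height_decomp[OF finP Pp]) (auto simp: P_def)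
  have locp: "Lp p ?b \<le> Lp p ?a + real e * Lp p y \<and> real e * Lp p y \<le> Lp p (inverse ?a) + Lp p ?b"
    if p: "p \<in> P" for p
  proof -
    have pr: "prime p" using Pp[OF p] .
    note NA = NAw[OF pr]
    have u: "padic_abs p ?b = padic_abs p ?a * padic_abs p y ^ e"
      by (simp add: padic_mult[OF NA] padic_power[OF NA])
    have s': "padic_abs p (inverse ?a) * padic_abs p ?b = padic_abs p y ^ e"
    proof -
      have "padic_abs p (inverse ?a) * padic_abs p ?b = padic_abs p (inverse ?a * ?b)"
        by (simp add: padic_mult[OF NA])
      also have "inverse ?a * ?b = y ^ e" using a0 by (simp add: mult.assoc[symmetric])
      finally show ?thesis by (simp add: padic_power[OF NA])
    qed
    show ?thesis using local_gap[OF padic_nonneg[OF NA] padic_nonneg[OF NA] u s' padic_nonneg[OF NA]] by simp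
  qed
  have locA: "LA ?b \<le> LA ?a + real e * LA y \<and> real e * LA y \<le> LA (inverse ?a) + LA ?b"
  proof -
    have u: "\<bar>real_of_rat ?b\<bar> = \<bar>real_of_rat ?a\<bar> * \<bar>real_of_rat y\<bar> ^ e"
      by (simp add: of_rat_mult of_rat_power abs_mult power_abs)
    have s': "\<bar>real_of_rat (inverse ?a)\<bar> * \<bar>real_of_rat ?b\<bar> = \<bar>real_of_rat y\<bar> ^ e"
    proof -
      have "\<bar>real_of_rat (inverse ?a)\<bar> * \<bar>real_of_rat ?b\<bar> = \<bar>real_of_rat (inverse ?a * ?b)\<bar>"
        by (simp only: of_rat_mult abs_mult)
      also have "inverse ?a * ?b = y ^ e" using a0 by (simp add: mult.assoc[symmetric])
      finally show ?thesis by (simp add: of_rat_power power_abs)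
    qed
    show ?thesis using local_gap[OF abs_ge_zero abs_ge_zero u s' abs_ge_zero] by simp
  qed
  have S1: "(\<Sum>p\<in>P. Lp p ?b) \<le> (\<Sum>p\<in>P. Lp p ?a) + real e * (\<Sum>p\<in>P. Lp p y)"
  proof -
    have "(\<Sum>p\<in>P. Lp p ?b) \<le> (\<Sum>p\<in>P. Lp p ?a + real e * Lp p y)"
      using locp by (intro sum_mono) blast
    then show ?thesis by (simp add: sum.distrib sum_distrib_left)
  qed
  have S2: "real e * (\<Sum>p\<in>P. Lp p y) \<le> (\<Sum>p\<in>P. Lp p (inverse ?a)) + (\<Sum>p\<in>P. Lp p ?b)"
  proof -
    have "(\<Sum>p\<in>P. real e * Lp p y) \<le> (\<Sum>p\<in>P. Lp p (inverse ?a) + Lp p ?b)"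
      using locp by (intro sum_mono) blast
    then show ?thesis by (simp add: sum.distrib sum_distrib_left)
  qed
  have up: "rat_height ?b \<le> rat_height ?a + real e * rat_height y"
    unfolding hA hY hB using S1 locA by (simp add: algebra_simps)
  have lo: "real e * rat_height y \<le> rat_height (inverse ?a) + rat_height ?b"
    unfolding hI hY hB using S2 locA by (simp add: algebra_simps)
  have e0: "real e \<ge> 1" using e1 by simp
  have Hy: "H y * real e = rat_height ?b" unfolding H_def using e0 by simp
  have n1: "rat_height ?a \<ge> 0" "rat_height (inverse ?a) \<ge> 0" by (rule rat_height_nonneg)+
  have "(H y - rat_height y) * real e \<le> rat_height ?a" using up Hy by (simp add: algebra_simps)
  moreover have "(rat_height y - H y) * real e \<le> rat_height (inverse ?a)" using lo Hy by (simp add: algebra_simps)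
  moreover have "x \<le> x * real e" if "x \<ge> 0" for x using that e0 by (simp add: mult_le_cancel_left1)
  ultimately show ?thesis using n1
    by (smt (verit) mult_nonneg_nonneg e0)
qed

end


context setting
begin

lemma main:
  fixes x :: rat and n :: nat
  shows "- c_tilde w \<phi> \<gamma> / real (degree \<phi>) ^ n
       \<le> canonical_height \<phi> x
          - rat_height (lead_coeff \<phi> * ((poly \<phi> ^^ n) x) ^ e) / (real e * real (degree \<phi>) ^ n)
     \<and> canonical_height \<phi> x
          - rat_height (lead_coeff \<phi> * ((poly \<phi> ^^ n) x) ^ e) / (real e * real (degree \<phi>) ^ n)
       \<le> C_tilde w \<phi> \<gamma> / real (degree \<phi>) ^ n"
proof -
  define D where "D = real (degree \<phi>)"
  have D2: "D \<ge> 2" using deg2 by (simp add: D_def)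
  have D0: "D > 0" using D2 by simp
  define X where "X k = (poly \<phi> ^^ k) x" for k
  have XS: "X (Suc k) = poly \<phi> (X k)" for k by (simp add: X_def)
  define Hs where "Hs k = H (X k) / D ^ k" for k
  define dl where "dl k = Hs (Suc k) - Hs k" for k
  have dup: "dl k \<le> SC / D ^ Suc k" for k
  proof -
    have "H (X (Suc k)) \<le> D * H (X k) + SC" unfolding XS D_def by (rule step_bounds(1))
    then have "H (X (Suc k)) / D ^ Suc k \<le> (D * H (X k) + SC) / D ^ Suc k"
      using D0 by (intro divide_right_mono) auto
    also have "\<dots> = H (X k) / D ^ k + SC / D ^ Suc k" using D0 by (simp add: field_simps)
    finally show ?thesis unfolding dl_def Hs_def by simp
  qed
  have dlo: "- (D * Sc) / D ^ Suc k \<le> dl k" for k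
  proof -
    have "D * H (X k) - D * Sc \<le> H (X (Suc k))" unfolding XS D_def by (rule step_bounds(2))
    then have "(D * H (X k) - D * Sc) / D ^ Suc k \<le> H (X (Suc k)) / D ^ Suc k"
      using D0 by (intro divide_right_mono) auto
    moreover have "(D * H (X k) - D * Sc) / D ^ Suc k = H (X k) / D ^ k - (D * Sc) / D ^ Suc k"
      using D0 by (simp add: field_simps)
    ultimately show ?thesis unfolding dl_def Hs_def by simp
  qed
  define M where "M = \<bar>SC\<bar> + \<bar>D * Sc\<bar>"
  have geo: "(1 / D) ^ k = 1 / D ^ k" for k by (simp add: power_one_over)
  have sg: "summable (\<lambda>k. c * (1 / D) ^ k)" for c
    using D2 by (intro summable_mult summable_geometric) simp
  have dbound: "norm (dl k) \<le> (M / D) * (1 / D) ^ k" for k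
  proof -
    have "(M / D) * (1 / D) ^ k = M / D ^ Suc k" using D0 by (simp add: geo)
    moreover have "\<bar>dl k\<bar> \<le> M / D ^ Suc k"
    proof -
      have "dl k \<le> \<bar>SC\<bar> / D ^ Suc k" using dup[of k] D0
        by (meson abs_ge_self divide_right_mono order_trans zero_le_power less_imp_le)
      also have "\<dots> \<le> M / D ^ Suc k" using D0 by (intro divide_right_mono) (auto simp: M_def)
      finally have a: "dl k \<le> M / D ^ Suc k" .
      have "- (M / D ^ Suc k) \<le> - (\<bar>D * Sc\<bar> / D ^ Suc k)"
        using D0 by (simp add: M_def divide_right_mono)
      also have "\<dots> \<le> - (D * Sc) / D ^ Suc k"
      proof -
        have h: "(D * Sc) / D ^ Suc k \<le> \<bar>D * Sc\<bar> / D ^ Suc k"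
          using D0 by (intro divide_right_mono) auto
        show ?thesis using h by (simp only: minus_divide_left[symmetric])
      qed
      also have "\<dots> \<le> dl k" by (rule dlo)
      finally have b: "- (M / D ^ Suc k) \<le> dl k" .
      from a b show ?thesis by simp
    qed
    ultimately show ?thesis by simp
  qed
  have sdl: "summable dl"
    by (rule summable_comparison_test'[OF sg[of "M / D"]]) (use dbound in auto)
  define L where "L = Hs 0 + suminf dl"
  have Hs_sum: "Hs n' = Hs 0 + (\<Sum>k<n'. dl k)" for n'
    unfolding dl_def by (simp add: sum_lessThan_telescope)
  have HsE: "Hs = (\<lambda>n'. Hs 0 + (\<Sum>k<n'. dl k))" by (intro ext) (rule Hs_sum)
  have "(\<lambda>n'. Hs 0 + (\<Sum>k<n'. dl k)) \<longlonglongrightarrow> L"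
    unfolding L_def by (intro tendsto_add tendsto_const summable_LIMSEQ sdl)
  then have HsL: "Hs \<longlonglongrightarrow> L" by (subst HsE)
  have tail: "L - Hs n = (\<Sum>i. dl (i + n))"
    using suminf_split_initial_segment[OF sdl, of n] Hs_sum[of n] unfolding L_def by simp
  have stail: "summable (\<lambda>i. dl (i + n))" using sdl by (rule summable_ignore_initial_segment)
  have gsum: "(\<Sum>i. c * (1 / D) ^ i) = c * (D / (D - 1))" for c
  proof -
    have "(\<Sum>i. c * (1 / D) ^ i) = c * (\<Sum>i. (1 / D) ^ i)"
      using D2 by (intro suminf_mult summable_geometric) simp
    also have "(\<Sum>i. (1 / D) ^ i) = 1 / (1 - 1 / D)" using D2 by (intro suminf_geometric) simp
    also have "1 / (1 - 1 / D) = D / (D - 1)" using D2 by (simp add: field_simps)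
    finally show ?thesis .
  qed
  have pw: "D ^ Suc (i + n) = D ^ Suc n * D ^ i" for i by (simp add: power_add mult_ac)
  have upper: "L - Hs n \<le> SC / D ^ Suc n * (D / (D - 1))"
  proof -
    have "(\<Sum>i. dl (i + n)) \<le> (\<Sum>i. SC / D ^ Suc n * (1 / D) ^ i)"
    proof (rule suminf_le[OF _ stail sg])
      fix i
      have "SC / D ^ Suc (i + n) = SC / D ^ Suc n * (1 / D) ^ i"
        unfolding pw geo using D0 by simp
      then show "dl (i + n) \<le> SC / D ^ Suc n * (1 / D) ^ i" using dup[of "i + n"] by simp
    qed
    then show ?thesis unfolding tail gsum .
  qed
  have lower: "- (D * Sc) / D ^ Suc n * (D / (D - 1)) \<le> L - Hs n"
  proof -
    have "(\<Sum>i. - (D * Sc) / D ^ Suc n * (1 / D) ^ i) \<le> (\<Sum>i. dl (i + n))"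
    proof (rule suminf_le[OF _ sg stail])
      fix i
      have "- (D * Sc) / D ^ Suc (i + n) = - (D * Sc) / D ^ Suc n * (1 / D) ^ i"
        unfolding pw geo using D0 by simp
      then show "- (D * Sc) / D ^ Suc n * (1 / D) ^ i \<le> dl (i + n)" using dlo[of "i + n"] by simp
    qed
    then show ?thesis unfolding tail gsum .
  qed
  define K where "K = rat_height (lead_coeff \<phi>) + rat_height (inverse (lead_coeff \<phi>))"
  define hs where "hs k = rat_height (X k) / D ^ k" for k
  have close: "norm (hs k - Hs k) \<le> K * (1 / D) ^ k" for k
  proof -
    have "\<bar>H (X k) - rat_height (X k)\<bar> \<le> K" unfolding K_def by (rule hgap)
    then have "\<bar>H (X k) - rat_height (X k)\<bar> / D ^ k \<le> K / D ^ k"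
      using D0 by (intro divide_right_mono) auto
    moreover have "\<bar>H (X k) - rat_height (X k)\<bar> / D ^ k = \<bar>hs k - Hs k\<bar>"
      using D0 by (simp add: hs_def Hs_def diff_divide_distrib[symmetric] abs_minus_commute)
    ultimately show ?thesis by (simp add: geo)
  qed
  have "(\<lambda>k. K * (1 / D) ^ k) \<longlonglongrightarrow> 0"
    using D2 by (intro tendsto_mult_right_zero LIMSEQ_power_zero) simp
  then have "(\<lambda>k. hs k - Hs k) \<longlonglongrightarrow> 0"
    by (rule Lim_null_comparison[rotated]) (use close in auto)
  then have "(\<lambda>k. (hs k - Hs k) + Hs k) \<longlonglongrightarrow> 0 + L" by (intro tendsto_add HsL)
  then have hsL: "hs \<longlonglongrightarrow> L" by simp
  have ch: "canonical_height \<phi> x = L"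
    unfolding canonical_height_def using hsL unfolding hs_def X_def D_def by (rule limI)
  have HsX: "rat_height (lead_coeff \<phi> * ((poly \<phi> ^^ n) x) ^ e) / (real e * D ^ n) = Hs n"
    unfolding Hs_def H_def X_def by simp
  have Ct: "C_tilde w \<phi> \<gamma> / D ^ n = SC / D ^ Suc n * (D / (D - 1))"
    unfolding C_tilde_def SC_def D_def[symmetric] using D2 by (simp add: field_simps)
  have ct: "- c_tilde w \<phi> \<gamma> / D ^ n = - (D * Sc) / D ^ Suc n * (D / (D - 1))"
    unfolding c_tilde_def Sc_def D_def[symmetric] using D2 by (simp add: field_simps)
  show ?thesis unfolding D_def[symmetric] ch HsX Ct ct using upper lower by simp
qed

end

theorem theorem2p7:
  fixes \<phi> :: "rat poly" and e :: nat and \<gamma> :: complex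
    and w :: "nat \<Rightarrow> complex \<Rightarrow> real"
  assumes "degree \<phi> \<ge> 2"
    and "e \<ge> 1"
    and "\<gamma> ^ e = of_rat (lead_coeff \<phi>)"
    and "\<And>p. prime p \<Longrightarrow> nonarch_ext_abs p (w p)"
  shows "\<forall>(x::rat) (n::nat).
     - c_tilde w \<phi> \<gamma> / real (degree \<phi>) ^ n
       \<le> canonical_height \<phi> x
          - rat_height (lead_coeff \<phi> * ((poly \<phi> ^^ n) x) ^ e) / (real e * real (degree \<phi>) ^ n)
     \<and> canonical_height \<phi> x
          - rat_height (lead_coeff \<phi> * ((poly \<phi> ^^ n) x) ^ e) / (real e * real (degree \<phi>) ^ n)
       \<le> C_tilde w \<phi> \<gamma> / real (degree \<phi>) ^ n"
proof (intro allI)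
  fix x :: rat and n :: nat
  interpret setting \<phi> e \<gamma> w using assms by unfold_locales auto
  show "- c_tilde w \<phi> \<gamma> / real (degree \<phi>) ^ n
       \<le> canonical_height \<phi> x
          - rat_height (lead_coeff \<phi> * ((poly \<phi> ^^ n) x) ^ e) / (real e * real (degree \<phi>) ^ n)
     \<and> canonical_height \<phi> x
          - rat_height (lead_coeff \<phi> * ((poly \<phi> ^^ n) x) ^ e) / (real e * real (degree \<phi>) ^ n)
       \<le> C_tilde w \<phi> \<gamma> / real (degree \<phi>) ^ n" by (rule main)
qed


end
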